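(* Let $1 \to \mathbf{Z} \to \mathbf{G} \xrightarrow{\pi} \mathbf{H} \to 1$ be a short exact sequence of groups (so $\mathbf{Z} = \ker\pi$ and $\pi$ is surjective), and let $\Delta$ be a poset with a bottom element $O$. Let $\Pi \colon \mathbf{G}^{\Delta} \to \mathbf{H}^{\Delta}$ be the functor induced by $\pi$, and let $\widetilde{\mathbf{H}^{\Delta}}$ be a subcategory of $\mathbf{H}^{\Delta}$ containing all objects of $\mathbf{H}^{\Delta}$ such that every hom-set $\mathrm{Hom}_{\widetilde{\mathbf{H}^{\Delta}}}(U,V)$ consists of exactly one morphism (in particular every endomorphism monoid in $\widetilde{\mathbf{H}^{\Delta}}$ is trivial). Let $\widetilde{\mathbf{G}^{\Delta}}$ be the pull-back of $\Pi$ along the inclusion $\iota \colon \widetilde{\mathbf{H}^{\Delta}} \to \mathbf{H}^{\Delta}$. Then for any objects $U$ and $V$ of $\widetilde{\mathbf{G}^{\Delta}}$, the map $\eta \mapsto \eta_O$ is a bijection from the hom-set $\mathrm{Hom}_{\widetilde{\mathbf{G}^{\Delta}}}(U,V)$ onto a coset of $\mathbf{Z}$ in $\mathbf{G}$.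
   Context: Groups are regarded as single-object categories whose morphisms are the group elements; a poset is a category with one morphism $x \to y$ iff $x \le y$, and a bottom element $O$ satisfies $O\le x$ for all $x$. For a group $\mathbf{K}$, $\mathbf{K}^{\Delta}$ is the category of functors $\Delta \to \mathbf{K}$ and natural transformations; a natural transformation $\eta\colon F\to F'$ in $\mathbf{G}^{\Delta}$ is determined by its component $\eta_O\in\mathbf{G}$, which can be any element of $\mathbf{G}$. The functor $\Pi$ sends an object $F$ to $\pi \circ F$ and a morphism $\eta$ to the natural transformation $\pi\eta$ with components $\pi(\eta_x)$ (the paper describes $\Pi$ as "the identity on objects", identifying $F$ with $\pi\circ F$). Concretely, $\widetilde{\mathbf{G}^{\Delta}}$ is the category whose objects are the objects $F$ of $\mathbf{G}^{\Delta}$ and whose morphisms $F \to F'$ are the natural transformations $\eta \colon F \to F'$ in $\mathbf{G}^{\Delta}$ such that $\Pi(\eta)$ is a morphism of $\widetilde{\mathbf{H}^{\Delta}}$. *)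

theory Defs
  imports "HOL-Algebra.Algebra"
begin

definition pos_arrows :: "'d set \<Rightarrow> ('d \<Rightarrow> 'd \<Rightarrow> bool) \<Rightarrow> ('d \<times> 'd) set" where
  "pos_arrows D leq = {(x, y). x \<in> D \<and> y \<in> D \<and> leq x y}"

definition is_poset :: "'d set \<Rightarrow> ('d \<Rightarrow> 'd \<Rightarrow> bool) \<Rightarrow> bool" where
  "is_poset D leq \<longleftrightarrow> (\<forall>x\<in>D. leq x x) \<and>
     (\<forall>x\<in>D. \<forall>y\<in>D. leq x y \<and> leq y x \<longrightarrow> x = y) \<and>
     (\<forall>x\<in>D. \<forall>y\<in>D. \<forall>z\<in>D. leq x y \<and> leq y z \<longrightarrow> leq x z)"

definition is_bottom :: "'d set \<Rightarrow> ('d \<Rightarrow> 'd \<Rightarrow> bool) \<Rightarrow> 'd \<Rightarrow> bool" where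
  "is_bottom D leq o0 \<longleftrightarrow> o0 \<in> D \<and> (\<forall>x\<in>D. leq o0 x)"

text \<open>Objects of K^\<Delta>: functors \<Delta> \<rightarrow> K (K a group viewed as a one-object
  category), i.e. a group element F(x,y) for each arrow x <= y, with identities
  sent to 1 and composites sent to products.\<close>

definition diag_functor :: "('g, 'm) monoid_scheme \<Rightarrow> 'd set \<Rightarrow> ('d \<Rightarrow> 'd \<Rightarrow> bool)
    \<Rightarrow> ('d \<times> 'd \<Rightarrow> 'g) \<Rightarrow> bool" where
  "diag_functor K D leq F \<longleftrightarrow>
     F \<in> extensional (pos_arrows D leq) \<and>
     (\<forall>p\<in>pos_arrows D leq. F p \<in> carrier K) \<and>
     (\<forall>x\<in>D. F (x, x) = \<one>\<^bsub>K\<^esub>) \<and>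
     (\<forall>x\<in>D. \<forall>y\<in>D. \<forall>z\<in>D. leq x y \<and> leq y z \<longrightarrow> F (x, z) = F (y, z) \<otimes>\<^bsub>K\<^esub> F (x, y))"

text \<open>Morphisms of K^\<Delta>: natural transformations, given by their components.\<close>

definition diag_nat :: "('g, 'm) monoid_scheme \<Rightarrow> 'd set \<Rightarrow> ('d \<Rightarrow> 'd \<Rightarrow> bool)
    \<Rightarrow> ('d \<times> 'd \<Rightarrow> 'g) \<Rightarrow> ('d \<times> 'd \<Rightarrow> 'g) \<Rightarrow> ('d \<Rightarrow> 'g) \<Rightarrow> bool" where
  "diag_nat K D leq F F' \<eta> \<longleftrightarrow>
     diag_functor K D leq F \<and> diag_functor K D leq F' \<and>
     \<eta> \<in> extensional D \<and> (\<forall>x\<in>D. \<eta> x \<in> carrier K) \<and>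
     (\<forall>x\<in>D. \<forall>y\<in>D. leq x y \<longrightarrow> F' (x, y) \<otimes>\<^bsub>K\<^esub> \<eta> x = \<eta> y \<otimes>\<^bsub>K\<^esub> F (x, y))"

definition Pi_obj :: "('g \<Rightarrow> 'h) \<Rightarrow> 'd set \<Rightarrow> ('d \<Rightarrow> 'd \<Rightarrow> bool)
    \<Rightarrow> ('d \<times> 'd \<Rightarrow> 'g) \<Rightarrow> ('d \<times> 'd \<Rightarrow> 'h)" where
  "Pi_obj \<pi> D leq F = (\<lambda>p\<in>pos_arrows D leq. \<pi> (F p))"

definition Pi_mor :: "('g \<Rightarrow> 'h) \<Rightarrow> 'd set \<Rightarrow> ('d \<Rightarrow> 'g) \<Rightarrow> ('d \<Rightarrow> 'h)" where
  "Pi_mor \<pi> D \<eta> = (\<lambda>x\<in>D. \<pi> (\<eta> x))"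

text \<open>A subcategory of K^\<Delta>, described by its morphism predicate HMor U V \<eta>,
  containing all objects of K^\<Delta> and with every hom-set a singleton.\<close>

definition singleton_hom_subcat :: "('h, 'm) monoid_scheme \<Rightarrow> 'd set \<Rightarrow> ('d \<Rightarrow> 'd \<Rightarrow> bool)
    \<Rightarrow> (('d \<times> 'd \<Rightarrow> 'h) \<Rightarrow> ('d \<times> 'd \<Rightarrow> 'h) \<Rightarrow> ('d \<Rightarrow> 'h) \<Rightarrow> bool) \<Rightarrow> bool" where
  "singleton_hom_subcat K D leq HMor \<longleftrightarrow>
     (\<forall>U V \<eta>. HMor U V \<eta> \<longrightarrow> diag_nat K D leq U V \<eta>) \<and>
     (\<forall>U. diag_functor K D leq U \<longrightarrow> HMor U U (\<lambda>x\<in>D. \<one>\<^bsub>K\<^esub>)) \<and>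
     (\<forall>U V W \<eta> \<theta>. HMor U V \<eta> \<longrightarrow> HMor V W \<theta> \<longrightarrow> HMor U W (\<lambda>x\<in>D. \<theta> x \<otimes>\<^bsub>K\<^esub> \<eta> x)) \<and>
     (\<forall>U V. diag_functor K D leq U \<and> diag_functor K D leq V \<longrightarrow> (\<exists>!\<eta>. HMor U V \<eta>))"

text \<open>Hom-sets of the pull-back of \<Pi> along the inclusion of the subcategory:
  natural transformations \<eta> in G^\<Delta> with \<Pi>(\<eta>) a morphism of the subcategory.\<close>

definition pb_hom :: "('g \<Rightarrow> 'h) \<Rightarrow> ('g, 'm) monoid_scheme \<Rightarrow> 'd set \<Rightarrow> ('d \<Rightarrow> 'd \<Rightarrow> bool)
    \<Rightarrow> (('d \<times> 'd \<Rightarrow> 'h) \<Rightarrow> ('d \<times> 'd \<Rightarrow> 'h) \<Rightarrow> ('d \<Rightarrow> 'h) \<Rightarrow> bool)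
    \<Rightarrow> ('d \<times> 'd \<Rightarrow> 'g) \<Rightarrow> ('d \<times> 'd \<Rightarrow> 'g) \<Rightarrow> ('d \<Rightarrow> 'g) set" where
  "pb_hom \<pi> G D leq HMor U V =
     {\<eta>. diag_nat G D leq U V \<eta> \<and> HMor (Pi_obj \<pi> D leq U) (Pi_obj \<pi> D leq V) (Pi_mor \<pi> D \<eta>)}"

end

theory Submission
  imports Defs
begin

lemma df_carrier: "diag_functor K D leq F \<Longrightarrow> x \<in> D \<Longrightarrow> y \<in> D \<Longrightarrow> leq x y \<Longrightarrow> F (x, y) \<in> carrier K"
  unfolding diag_functor_def pos_arrows_def by blast

lemma df_id: "diag_functor K D leq F \<Longrightarrow> x \<in> D \<Longrightarrow> F (x, x) = \<one>\<^bsub>K\<^esub>"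
  unfolding diag_functor_def by blast

lemma df_comp: "diag_functor K D leq F \<Longrightarrow> x \<in> D \<Longrightarrow> y \<in> D \<Longrightarrow> z \<in> D \<Longrightarrow> leq x y \<Longrightarrow> leq y z
  \<Longrightarrow> F (x, z) = F (y, z) \<otimes>\<^bsub>K\<^esub> F (x, y)"
  unfolding diag_functor_def by blast

context group
begin

lemma nat_det:
  assumes "diag_nat G D leq U V \<eta>" "is_bottom D leq o0"
  shows "\<eta> = (\<lambda>y\<in>D. V (o0, y) \<otimes> \<eta> o0 \<otimes> inv (U (o0, y)))"
proof
  fix y
  show "\<eta> y = (\<lambda>y\<in>D. V (o0, y) \<otimes> \<eta> o0 \<otimes> inv (U (o0, y))) y"
  proof (cases "y \<in> D")
    case True
    have o: "o0 \<in> D" "leq o0 y" using assms(2) True by (auto simp: is_bottom_def)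
    have U: "U (o0, y) \<in> carrier G" and V: "V (o0, y) \<in> carrier G"
      using assms(1) o True by (auto simp: diag_nat_def diag_functor_def pos_arrows_def)
    have e: "\<eta> y \<in> carrier G" "\<eta> o0 \<in> carrier G" using assms(1) o True by (auto simp: diag_nat_def)
    have n: "V (o0, y) \<otimes> \<eta> o0 = \<eta> y \<otimes> U (o0, y)"
      using assms(1) o True by (auto simp: diag_nat_def)
    have "V (o0, y) \<otimes> \<eta> o0 \<otimes> inv (U (o0, y)) = \<eta> y \<otimes> U (o0, y) \<otimes> inv (U (o0, y))"
      by (simp add: n)
    also have "\<dots> = \<eta> y" using U e by (simp add: m_assoc)
    finally show ?thesis using True by simp
  next
    case False
    then show ?thesis using assms(1) by (auto simp: diag_nat_def extensional_def)
  qed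
qed

lemma nat_eq:
  assumes "diag_nat G D leq U V \<eta>" "diag_nat G D leq U V \<eta>'" "is_bottom D leq o0"
    "\<eta> o0 = \<eta>' o0"
  shows "\<eta> = \<eta>'"
  using nat_det[OF assms(1,3)] nat_det[OF assms(2,3)] assms(4) by simp

lemma nat_ex:
  assumes "diag_functor G D leq U" "diag_functor G D leq V" "is_poset D leq"
    "is_bottom D leq o0" "g \<in> carrier G"
  shows "diag_nat G D leq U V (\<lambda>y\<in>D. V (o0, y) \<otimes> g \<otimes> inv (U (o0, y)))"
    and "(\<lambda>y\<in>D. V (o0, y) \<otimes> g \<otimes> inv (U (o0, y))) o0 = g"
proof -
  have o: "o0 \<in> D" "\<And>x. x \<in> D \<Longrightarrow> leq o0 x" using assms(4) by (auto simp: is_bottom_def)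
  have Uc: "\<And>x y. x \<in> D \<Longrightarrow> y \<in> D \<Longrightarrow> leq x y \<Longrightarrow> U (x, y) \<in> carrier G"
   and Vc: "\<And>x y. x \<in> D \<Longrightarrow> y \<in> D \<Longrightarrow> leq x y \<Longrightarrow> V (x, y) \<in> carrier G"
    using assms(1,2) by (auto intro: df_carrier)
  have U1: "U (o0, o0) = \<one>" and V1: "V (o0, o0) = \<one>" using assms(1,2) o
    by (auto intro: df_id)
  show "(\<lambda>y\<in>D. V (o0, y) \<otimes> g \<otimes> inv (U (o0, y))) o0 = g"
    using o U1 V1 assms(5) by simp
  show "diag_nat G D leq U V (\<lambda>y\<in>D. V (o0, y) \<otimes> g \<otimes> inv (U (o0, y)))"
    unfolding diag_nat_def
  proof (intro conjI ballI impI)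
    fix x assume "x \<in> D" then show "(\<lambda>y\<in>D. V (o0, y) \<otimes> g \<otimes> inv (U (o0, y))) x \<in> carrier G"
      using Uc Vc o assms(5) by simp
  next
    fix x y assume xy: "x \<in> D" "y \<in> D" "leq x y"
    have cU: "U (o0, y) = U (x, y) \<otimes> U (o0, x)" and cV: "V (o0, y) = V (x, y) \<otimes> V (o0, x)"
      using assms(1,2) o xy df_comp by metis+
    have c: "U (x,y) \<in> carrier G" "U (o0,x) \<in> carrier G" "V (x,y) \<in> carrier G" "V (o0,x) \<in> carrier G"
      using Uc Vc o xy by auto
    have "V (x, y) \<otimes> (V (o0, x) \<otimes> g \<otimes> inv (U (o0, x)))
       = V (o0, y) \<otimes> g \<otimes> inv (U (o0, y)) \<otimes> U (x, y)"
      using c assms(5) by (simp add: cU cV inv_mult_group m_assoc)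
    then show "V (x, y) \<otimes> (\<lambda>y\<in>D. V (o0, y) \<otimes> g \<otimes> inv (U (o0, y))) x =
         (\<lambda>y\<in>D. V (o0, y) \<otimes> g \<otimes> inv (U (o0, y))) y \<otimes> U (x, y)" using xy by simp
  qed (use assms in auto)
qed

end

lemma Pi_functor:
  assumes "group_hom G H \<pi>" "diag_functor G D leq F" "is_poset D leq"
  shows "diag_functor H D leq (Pi_obj \<pi> D leq F)"
proof -
  interpret group_hom G H \<pi> by fact
  have r: "\<And>x. x \<in> D \<Longrightarrow> leq x x" and t: "\<And>x y z. x \<in> D \<Longrightarrow> y \<in> D \<Longrightarrow> z \<in> D \<Longrightarrow> leq x y \<Longrightarrow> leq y z \<Longrightarrow> leq x z"
    using assms(3) unfolding is_poset_def by blast+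
  show ?thesis unfolding diag_functor_def
  proof (intro conjI ballI impI)
    show "Pi_obj \<pi> D leq F \<in> extensional (pos_arrows D leq)" by (simp add: Pi_obj_def)
    fix p assume p: "p \<in> pos_arrows D leq"
    then obtain x y where "p = (x, y)" "x \<in> D" "y \<in> D" "leq x y" by (auto simp: pos_arrows_def)
    then show "Pi_obj \<pi> D leq F p \<in> carrier H" using p df_carrier[OF assms(2)]
      by (simp add: Pi_obj_def)
  next
    fix x assume x: "x \<in> D"
    then show "Pi_obj \<pi> D leq F (x, x) = \<one>\<^bsub>H\<^esub>" using r df_id[OF assms(2)]
      by (simp add: Pi_obj_def pos_arrows_def)
  next
    fix x y z assume xyz: "x \<in> D" "y \<in> D" "z \<in> D" "leq x y \<and> leq y z"
    then have "leq x z" using t by blast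
    then show "Pi_obj \<pi> D leq F (x, z) = Pi_obj \<pi> D leq F (y, z) \<otimes>\<^bsub>H\<^esub> Pi_obj \<pi> D leq F (x, y)"
      using xyz df_comp[OF assms(2), of x y z] df_carrier[OF assms(2)]
      by (simp add: Pi_obj_def pos_arrows_def)
  qed
qed

lemma Pi_nat:
  assumes "group_hom G H \<pi>" "diag_nat G D leq U V \<eta>" "is_poset D leq"
  shows "diag_nat H D leq (Pi_obj \<pi> D leq U) (Pi_obj \<pi> D leq V) (Pi_mor \<pi> D \<eta>)"
proof -
  interpret group_hom G H \<pi> by fact
  have fU: "diag_functor G D leq U" and fV: "diag_functor G D leq V"
    using assms(2) by (auto simp: diag_nat_def)
  show ?thesis unfolding diag_nat_def
  proof (intro conjI ballI impI)
    show "diag_functor H D leq (Pi_obj \<pi> D leq U)" by (rule Pi_functor[OF assms(1) fU assms(3)])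
    show "diag_functor H D leq (Pi_obj \<pi> D leq V)" by (rule Pi_functor[OF assms(1) fV assms(3)])
    show "Pi_mor \<pi> D \<eta> \<in> extensional D" by (simp add: Pi_mor_def)
    fix x assume "x \<in> D" then show "Pi_mor \<pi> D \<eta> x \<in> carrier H"
      using assms(2) by (auto simp: Pi_mor_def diag_nat_def)
  next
    fix x y assume xy: "x \<in> D" "y \<in> D" "leq x y"
    have c: "U (x,y) \<in> carrier G" "V (x,y) \<in> carrier G" "\<eta> x \<in> carrier G" "\<eta> y \<in> carrier G"
      using assms(2) xy by (auto simp: diag_nat_def diag_functor_def pos_arrows_def)
    have "V (x, y) \<otimes>\<^bsub>G\<^esub> \<eta> x = \<eta> y \<otimes>\<^bsub>G\<^esub> U (x, y)" using assms(2) xy by (auto simp: diag_nat_def)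
    then have "\<pi> (V (x, y)) \<otimes>\<^bsub>H\<^esub> \<pi> (\<eta> x) = \<pi> (\<eta> y) \<otimes>\<^bsub>H\<^esub> \<pi> (U (x, y))"
      using c by (metis hom_mult)
    then show "Pi_obj \<pi> D leq V (x, y) \<otimes>\<^bsub>H\<^esub> Pi_mor \<pi> D \<eta> x =
         Pi_mor \<pi> D \<eta> y \<otimes>\<^bsub>H\<^esub> Pi_obj \<pi> D leq U (x, y)"
      using xy by (simp add: Pi_obj_def Pi_mor_def pos_arrows_def)
  qed
qed

theorem proposition4:
  fixes G :: "('g, 'a) monoid_scheme" and H :: "('h, 'b) monoid_scheme"
    and \<pi> :: "'g \<Rightarrow> 'h" and D :: "'d set" and leq :: "'d \<Rightarrow> 'd \<Rightarrow> bool" and o0 :: 'd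
    and HMor :: "('d \<times> 'd \<Rightarrow> 'h) \<Rightarrow> ('d \<times> 'd \<Rightarrow> 'h) \<Rightarrow> ('d \<Rightarrow> 'h) \<Rightarrow> bool"
    and U V :: "'d \<times> 'd \<Rightarrow> 'g"
  assumes "group G" and "group H"
    and "\<pi> \<in> hom G H" and "\<pi> ` carrier G = carrier H"
    and "is_poset D leq" and "is_bottom D leq o0"
    and "singleton_hom_subcat H D leq HMor"
    and "diag_functor G D leq U" and "diag_functor G D leq V"
  shows "\<exists>g\<in>carrier G.
           bij_betw (\<lambda>\<eta>. \<eta> o0) (pb_hom \<pi> G D leq HMor U V) (kernel G H \<pi> #>\<^bsub>G\<^esub> g)"
proof -
  interpret G: group G by fact
  interpret H: group H by fact
  have gh: "group_hom G H \<pi>" using assms(1-3) by (simp add: group_hom_def group_hom_axioms_def)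
  interpret group_hom G H \<pi> by fact
  have o: "o0 \<in> D" using assms(6) by (simp add: is_bottom_def)
  define PU where "PU = Pi_obj \<pi> D leq U"
  define PV where "PV = Pi_obj \<pi> D leq V"
  have fPU: "diag_functor H D leq PU" unfolding PU_def by (rule Pi_functor[OF gh assms(8) assms(5)])
  have fPV: "diag_functor H D leq PV" unfolding PV_def by (rule Pi_functor[OF gh assms(9) assms(5)])
  obtain \<theta> where th: "HMor PU PV \<theta>" and thu: "\<And>\<eta>. HMor PU PV \<eta> \<Longrightarrow> \<eta> = \<theta>"
    using assms(7) fPU fPV unfolding singleton_hom_subcat_def by metis
  have thn: "diag_nat H D leq PU PV \<theta>"
    using assms(7) th unfolding singleton_hom_subcat_def by blast
  have "\<theta> o0 \<in> carrier H" using thn o by (auto simp: diag_nat_def)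
  then obtain g0 where g0: "g0 \<in> carrier G" "\<pi> g0 = \<theta> o0" using assms(4) by (metis imageE)
  define E where "E = (\<lambda>g. \<lambda>y\<in>D. V (o0, y) \<otimes>\<^bsub>G\<^esub> g \<otimes>\<^bsub>G\<^esub> inv\<^bsub>G\<^esub> (U (o0, y)))"
  have pbI: "\<eta> \<in> pb_hom \<pi> G D leq HMor U V \<longleftrightarrow> diag_nat G D leq U V \<eta> \<and> \<pi> (\<eta> o0) = \<theta> o0" for \<eta>
  proof
    assume "\<eta> \<in> pb_hom \<pi> G D leq HMor U V"
    then have n: "diag_nat G D leq U V \<eta>" and h: "HMor PU PV (Pi_mor \<pi> D \<eta>)"
      by (auto simp: pb_hom_def PU_def PV_def)
    have "Pi_mor \<pi> D \<eta> = \<theta>" by (rule thu[OF h])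
    then show "diag_nat G D leq U V \<eta> \<and> \<pi> (\<eta> o0) = \<theta> o0"
      using n o by (metis Pi_mor_def restrict_apply')
  next
    assume a: "diag_nat G D leq U V \<eta> \<and> \<pi> (\<eta> o0) = \<theta> o0"
    have pn: "diag_nat H D leq PU PV (Pi_mor \<pi> D \<eta>)"
      unfolding PU_def PV_def using Pi_nat[OF gh _ assms(5)] a by blast
    have "Pi_mor \<pi> D \<eta> = \<theta>"
      by (rule H.nat_eq[OF pn thn assms(6)]) (use a o in \<open>simp add: Pi_mor_def\<close>)
    then show "\<eta> \<in> pb_hom \<pi> G D leq HMor U V" using a th
      by (simp add: pb_hom_def PU_def PV_def)
  qed
  have ker: "x \<in> kernel G H \<pi> #>\<^bsub>G\<^esub> g0 \<longleftrightarrow> x \<in> carrier G \<and> \<pi> x = \<theta> o0" for x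
  proof
    assume "x \<in> kernel G H \<pi> #>\<^bsub>G\<^esub> g0"
    then obtain k where k: "k \<in> carrier G" "\<pi> k = \<one>\<^bsub>H\<^esub>" "x = k \<otimes>\<^bsub>G\<^esub> g0"
      by (auto simp: r_coset_def kernel_def)
    then show "x \<in> carrier G \<and> \<pi> x = \<theta> o0" using g0 by (metis G.m_closed H.l_one hom_closed hom_mult)
  next
    assume a: "x \<in> carrier G \<and> \<pi> x = \<theta> o0"
    have "x \<otimes>\<^bsub>G\<^esub> inv\<^bsub>G\<^esub> g0 \<in> kernel G H \<pi>"
      using a g0 \<open>\<theta> o0 \<in> carrier H\<close> by (simp add: kernel_def)
    moreover have "x = x \<otimes>\<^bsub>G\<^esub> inv\<^bsub>G\<^esub> g0 \<otimes>\<^bsub>G\<^esub> g0" using a g0 by (simp add: G.m_assoc)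
    ultimately show "x \<in> kernel G H \<pi> #>\<^bsub>G\<^esub> g0" unfolding r_coset_def by blast
  qed
  have "bij_betw (\<lambda>\<eta>. \<eta> o0) (pb_hom \<pi> G D leq HMor U V) (kernel G H \<pi> #>\<^bsub>G\<^esub> g0)"
    unfolding bij_betw_def
  proof (intro conjI)
    show "inj_on (\<lambda>\<eta>. \<eta> o0) (pb_hom \<pi> G D leq HMor U V)"
      by (rule inj_onI) (use pbI G.nat_eq[OF _ _ assms(6)] in blast)
    show "(\<lambda>\<eta>. \<eta> o0) ` pb_hom \<pi> G D leq HMor U V = kernel G H \<pi> #>\<^bsub>G\<^esub> g0"
    proof
      show "(\<lambda>\<eta>. \<eta> o0) ` pb_hom \<pi> G D leq HMor U V \<subseteq> kernel G H \<pi> #>\<^bsub>G\<^esub> g0"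
        using pbI ker o by (auto simp: diag_nat_def)
    next
      show "kernel G H \<pi> #>\<^bsub>G\<^esub> g0 \<subseteq> (\<lambda>\<eta>. \<eta> o0) ` pb_hom \<pi> G D leq HMor U V"
      proof
        fix x assume "x \<in> kernel G H \<pi> #>\<^bsub>G\<^esub> g0"
        then have x: "x \<in> carrier G" "\<pi> x = \<theta> o0" using ker by auto
        have n: "diag_nat G D leq U V (E x)" and e: "E x o0 = x"
          unfolding E_def using G.nat_ex[OF assms(8,9,5,6) x(1)] by auto
        have "E x \<in> pb_hom \<pi> G D leq HMor U V" using pbI n e x by simp
        then show "x \<in> (\<lambda>\<eta>. \<eta> o0) ` pb_hom \<pi> G D leq HMor U V" using e by (metis image_eqI)
      qed
    qed
  qed
  then show ?thesis using g0 by blast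
qed

end
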